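(* Let $f^{\mathrm{lgt}}:\mathcal{X}\to\mathbb{R}^K$ satisfy $\|f^{\mathrm{lgt}}(x)\|_2\le L_f$ for all $x$, and let $\mathcal{L}_{\mathrm{calib}}:\mathbb{R}^K\times\mathbb{R}^K\to[0,1]$ be $L_c$-Lipschitz in its second argument. Let $\alpha_-\le\alpha_+$ and $\mathcal{A}'=\{\boldsymbol\alpha=(\alpha_1,\dots,\alpha_K):\ \alpha_-\le\alpha_j\le\alpha_+\ \forall j\}$. Given $n$ i.i.d. validation samples $\mathcal{S}=(X_i,Y_i)_{i=1}^n\sim\mathcal{D}$, let $\boldsymbol\alpha^\star\in\arg\min_{\boldsymbol\alpha\in\mathcal{A}'}\mathcal{L}_{\mathrm{calib}}(\boldsymbol\alpha,\mathcal{S})$ (equivalently, each $\alpha_k^\star$ minimizes the empirical calibration loss over $\mathcal{S}_k=\{(X_i,Y_i)\in\mathcal{S}:\hat Y_i=k\}$). Let $\mathcal{D}_k$ be the conditional distribution of $(X,Y)$ given $\hat Y=k$ and $p_{\min}=\min_{1\le k\le K}\mathbb{P}(\hat Y=k)$. Then with probability at least $1-K(\delta+e^{-p_{\min}n/8})$, for all $1\le k\le K$, $$\mathcal{L}_{\mathrm{calib}}(\alpha_k^\star,\mathcal{D}_k)\le\min_{\alpha_-\le\alpha\le\alpha_+}\mathcal{L}_{\mathrm{calib}}(\alpha,\mathcal{D}_k)+6\sqrt{\frac{\log(1+4(\alpha_+-\alpha_-)\sqrt nL_fL_c)}{p_{\min}n}}+12\sqrt{\frac{\log(2/\delta)}{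p_{\min}n}}.$$
   Context: Multiclass setup: $X\in\mathcal{X}$, $Y\in\{1,\dots,K\}$, $(X,Y)\sim\mathcal{D}$; classifier $f(X)=\mathrm{softmax}(f^{\mathrm{lgt}}(X))$ with predicted label $\hat Y=\arg\max_kf(X)_k$; temperature-scaled classifier $f_\alpha(X)=\mathrm{softmax}(\alpha f^{\mathrm{lgt}}(X))$; $Y$ is viewed as a vector in $\mathbb{R}^K$ inside $\mathcal{L}_{\mathrm{calib}}(Y,\cdot)$. Empirical loss $\mathcal{L}_{\mathrm{calib}}(\boldsymbol\alpha,\mathcal{S})=\frac1n\sum_{i=1}^n\mathcal{L}_{\mathrm{calib}}(Y_i,f_{\alpha_{\hat Y_i}}(X_i))$; for a scalar $\alpha$, $\mathcal{L}_{\mathrm{calib}}(\alpha,\mathcal{D}_k)=\mathbb{E}[\mathcal{L}_{\mathrm{calib}}(Y,f_\alpha(X))\mid\hat Y=k]$. *)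

theory Defs
  imports "HOL-Probability.Probability"
begin

text \<open>Labels are elements of a finite type 'k, so K = CARD('k); logits live in real^'k
  (whose norm is the Euclidean 2-norm).\<close>

definition softmax :: "real^'k \<Rightarrow> real^'k" where
  "softmax v = (\<chi> i. exp (v $ i) / (\<Sum>j\<in>UNIV. exp (v $ j)))"

definition onehot :: "'k \<Rightarrow> real^'k" where
  "onehot y = (\<chi> j. if j = y then 1 else 0)"

definition temp_scaled :: "('x \<Rightarrow> real^'k) \<Rightarrow> real \<Rightarrow> 'x \<Rightarrow> real^'k" where
  "temp_scaled flgt a x = softmax (a *\<^sub>R flgt x)"

definition emp_calib_loss ::
  "(real^'k \<Rightarrow> real^'k \<Rightarrow> real) \<Rightarrow> ('x \<Rightarrow> real^'k) \<Rightarrow> ('x \<Rightarrow> 'k) \<Rightarrow> nat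
     \<Rightarrow> (nat \<Rightarrow> 'x \<times> 'k) \<Rightarrow> real^'k \<Rightarrow> real" where
  "emp_calib_loss Lcal flgt hat n S alpha =
     (1 / real n) * (\<Sum>i<n. Lcal (onehot (snd (S i)))
                              (temp_scaled flgt (alpha $ hat (fst (S i))) (fst (S i))))"

definition cond_calib_loss ::
  "(real^'k \<Rightarrow> real^'k \<Rightarrow> real) \<Rightarrow> ('x \<Rightarrow> real^'k) \<Rightarrow> ('x \<Rightarrow> 'k)
     \<Rightarrow> ('x \<times> 'k) measure \<Rightarrow> 'k \<Rightarrow> real \<Rightarrow> real" where
  "cond_calib_loss Lcal flgt hat D k a =
     (\<integral>z\<in>{z\<in>space D. hat (fst z) = k}. Lcal (onehot (snd z)) (temp_scaled flgt a (fst z)) \<partial>D)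
       / measure D {z\<in>space D. hat (fst z) = k}"

definition p_min :: "('x \<Rightarrow> 'k::finite) \<Rightarrow> ('x \<times> 'k) measure \<Rightarrow> real" where
  "p_min hat D = Min (range (\<lambda>k. measure D {z\<in>space D. hat (fst z) = k}))"

end

theory Submission
  imports Defs
begin


lemma softmax_deriv:
  fixes v :: "real^'k"
  defines "Z \<equiv> \<lambda>t. (\<Sum>j\<in>UNIV. exp (t * v $ j))"
  shows "((\<lambda>t. softmax (t *\<^sub>R v)) has_derivative
     (\<lambda>h. h *\<^sub>R (\<chi> i. exp (t * v $ i) / Z t * (v $ i - (\<Sum>j\<in>UNIV. exp (t * v $ j) / Z t * v $ j))))) (at t within S)"
proof -
  have Zpos: "\<And>t. Z t > 0" unfolding Z_def by (intro sum_pos) auto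
  have Zd: "(Z has_real_derivative (\<Sum>j\<in>UNIV. v $ j * exp (t * v $ j))) (at t within S)"
    unfolding Z_def by (auto intro!: derivative_eq_intros simp: mult.commute)
  show ?thesis
  proof (subst has_derivative_componentwise_within, intro ballI)
    fix b :: "real^'k" assume "b \<in> Basis"
    then obtain i where b: "b = axis i 1" by (auto simp: Basis_vec_def)
    have e: "\<And>t. softmax (t *\<^sub>R v) \<bullet> b = exp (t * v $ i) / Z t"
      by (simp add: b inner_axis softmax_def Z_def)
    have d: "((\<lambda>t. exp (t * v $ i) / Z t) has_real_derivative
        exp (t * v $ i) / Z t * (v $ i - (\<Sum>j\<in>UNIV. exp (t * v $ j) / Z t * v $ j))) (at t within S)"
    proof -
      have "((\<lambda>t. exp (t * v $ i) / Z t) has_real_derivative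
        ((v $ i * exp (t * v $ i)) * Z t - exp (t * v $ i) * (\<Sum>j\<in>UNIV. v $ j * exp (t * v $ j))) / (Z t * Z t)) (at t within S)"
        using Zpos[of t] by (auto intro!: derivative_eq_intros Zd)
      moreover have "((v $ i * exp (t * v $ i)) * Z t - exp (t * v $ i) * (\<Sum>j\<in>UNIV. v $ j * exp (t * v $ j))) / (Z t * Z t)
         = exp (t * v $ i) / Z t * (v $ i - (\<Sum>j\<in>UNIV. exp (t * v $ j) / Z t * v $ j))"
        using Zpos[of t]
        by (simp add: field_simps sum_divide_distrib[symmetric] sum_distrib_left mult_ac)
      ultimately show ?thesis by simp
    qed
    show "((\<lambda>t. softmax (t *\<^sub>R v) \<bullet> b) has_derivative
       (\<lambda>h. (h *\<^sub>R (\<chi> i. exp (t * v $ i) / Z t * (v $ i - (\<Sum>j\<in>UNIV. exp (t * v $ j) / Z t * v $ j)))) \<bullet> b)) (at t within S)"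
      unfolding e
      by (rule has_derivative_eq_rhs[OF d[unfolded has_field_derivative_def]]) (auto simp: fun_eq_iff b inner_axis)
  qed
qed

lemma softmax_lip:
  fixes v :: "real^'k"
  shows "norm (softmax (a *\<^sub>R v) - softmax (b *\<^sub>R v)) \<le> 2 * norm v * \<bar>a - b\<bar>"
proof -
  define Z where "Z = (\<lambda>t. (\<Sum>j\<in>UNIV. exp (t * v $ j)))"
  define s where "s = (\<lambda>t i. exp (t * v $ i) / Z t)"
  define w where "w = (\<lambda>t. (\<chi> i. s t i * (v $ i - (\<Sum>j\<in>UNIV. s t j * v $ j))) :: real^'k)"
  have Zpos: "\<And>t. Z t > 0" unfolding Z_def by (intro sum_pos) auto
  have s1: "\<And>t. (\<Sum>i\<in>UNIV. s t i) = 1"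
    using Zpos unfolding s_def Z_def by (metis (no_types) less_irrefl sum_divide_distrib divide_self)
  have s0: "\<And>t i. s t i \<ge> 0" using Zpos by (simp add: s_def less_imp_le)
  have der: "\<And>t. ((\<lambda>t. softmax (t *\<^sub>R v)) has_derivative (\<lambda>h. h *\<^sub>R w t)) (at t within UNIV)"
    using softmax_deriv[of v] unfolding w_def s_def Z_def by blast
  have wb: "norm (w t) \<le> 2 * norm v" for t
  proof -
    have m: "\<bar>\<Sum>j\<in>UNIV. s t j * v $ j\<bar> \<le> norm v"
    proof -
      have "\<bar>\<Sum>j\<in>UNIV. s t j * v $ j\<bar> \<le> (\<Sum>j\<in>UNIV. s t j * norm v)"
        by (rule order.trans[OF sum_abs]) (auto intro!: sum_mono simp: abs_mult s0 mult_left_mono component_le_norm_cart)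
      also have "\<dots> = norm v" using s1[of t] by (simp add: sum_distrib_right[symmetric])
      finally show ?thesis .
    qed
    have "norm (w t) \<le> (\<Sum>i\<in>UNIV. \<bar>w t $ i\<bar>)" by (rule norm_le_l1_cart)
    also have "\<dots> \<le> (\<Sum>i\<in>UNIV. s t i * (2 * norm v))"
    proof (rule sum_mono)
      fix i
      have "\<bar>v $ i - (\<Sum>j\<in>UNIV. s t j * v $ j)\<bar> \<le> 2 * norm v"
        using m component_le_norm_cart[of v i] by linarith
      then show "\<bar>w t $ i\<bar> \<le> s t i * (2 * norm v)"
        by (simp add: w_def abs_mult s0 mult_left_mono)
    qed
    also have "\<dots> = 2 * norm v" using s1[of t] by (simp add: sum_distrib_right[symmetric])
    finally show ?thesis .
  qed
  have "norm (softmax (a *\<^sub>R v) - softmax (b *\<^sub>R v)) \<le> (2 * norm v) * norm (a - b)"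
  proof (rule differentiable_bound[where S=UNIV and f'="\<lambda>t h. h *\<^sub>R w t"])
    fix t :: real
    show "onorm (\<lambda>h. h *\<^sub>R w t) \<le> 2 * norm v"
      by (rule onorm_le) (use wb in \<open>auto simp: mult.commute mult_left_mono\<close>)
  qed (use der in auto)
  then show ?thesis by simp
qed

lemma softmax_cont: "continuous_on UNIV (softmax :: real^'k \<Rightarrow> real^'k)"
  unfolding softmax_def
  by (intro continuous_on_vec_lambda continuous_intros) (auto intro: sum_pos simp: less_imp_neq[symmetric] sum_pos)

context prob_space begin

lemma bint: "f \<in> borel_measurable M \<Longrightarrow> (\<And>x. \<bar>f x\<bar> \<le> B) \<Longrightarrow> integrable M (f :: _ \<Rightarrow> real)"
  by (rule integrable_const_bound[where B=B]) auto

lemma mgf_one: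
  assumes gm[measurable]: "g \<in> borel_measurable M" and g01: "\<And>z. 0 \<le> g z \<and> g z \<le> 1"
    and Am[measurable]: "A \<in> sets M" and qpos: "prob A > 0"
    and m: "m = (LINT z:A|M. g z) / prob A" and l: "l \<ge> 0"
  shows "(\<integral>\<^sup>+z. ennreal (exp (l * (indicator A z * (g z - m)))) \<partial>M) \<le> ennreal (exp (prob A * (exp (l\<^sup>2/8) - 1)))"
proof -
  define q where "q = prob A"
  define G where "G = (\<lambda>z. indicator A z * g z)"
  have Gm[measurable]: "G \<in> borel_measurable M" unfolding G_def by measurable
  have intG: "integrable M G" by (rule bint[where B=1]) (use g01 in \<open>auto simp: G_def indicator_def\<close>)
  have SI: "(LINT z:A|M. g z) = integral\<^sup>L M G" by (simp add: set_lebesgue_integral_def G_def)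
  have IG0: "0 \<le> integral\<^sup>L M G" by (rule Bochner_Integration.integral_nonneg) (use g01 in \<open>auto simp: G_def\<close>)
  have intA: "integrable M (indicator A :: _ \<Rightarrow> real)" by (rule bint[where B=1]) (auto simp: indicator_def)
  have IGq: "integral\<^sup>L M G \<le> q"
  proof -
    have "integral\<^sup>L M G \<le> integral\<^sup>L M (indicator A)"
      by (rule integral_mono[OF intG intA]) (use g01 in \<open>auto simp: G_def indicator_def\<close>)
    also have "\<dots> = q" using sets.sets_into_space[OF Am] by (simp add: q_def Int_absorb2)
    finally show ?thesis .
  qed
  have q0: "q > 0" using qpos by (simp add: q_def)
  have mq: "integral\<^sup>L M G = m * q" using q0 by (simp add: m SI q_def)
  have m0: "0 \<le> m" "m \<le> 1" using mq IG0 IGq q0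
    by (simp_all add: zero_le_mult_iff)
  define H where "H = (\<lambda>z. indicator A z * ((1 - g z) * exp (- l * m) + g z * exp (l * (1 - m))) + (1 - indicator A z))"
  have Hm[measurable]: "H \<in> borel_measurable M" unfolding H_def by measurable
  have H0: "\<And>z. 0 \<le> H z" using g01 by (auto simp: H_def indicator_def intro!: add_nonneg_nonneg mult_nonneg_nonneg)
  have pw: "exp (l * (indicator A z * (g z - m))) \<le> H z" for z
  proof (cases "z \<in> A")
    case True
    have c: "convex_on UNIV (\<lambda>x. exp (l * x))" by (rule convex_on_exp[OF l])
    have "exp (l * ((1 - g z) *\<^sub>R (- m) + g z *\<^sub>R (1 - m))) \<le> (1 - g z) * exp (l * (- m)) + g z * exp (l * (1 - m))"
      using convex_onD[OF c, of "g z" "- m" "1 - m"] g01[of z] by simp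
    moreover have "(1 - g z) *\<^sub>R (- m) + g z *\<^sub>R (1 - m) = g z - m" by (simp add: algebra_simps)
    ultimately show ?thesis using True by (simp add: H_def)
  qed (simp add: H_def)
  have intH: "integrable M H"
  proof (rule bint[OF Hm, where B="exp (- l * m) + exp (l * (1 - m)) + 1"])
    fix z
    have a: "(1 - g z) * exp (- l * m) \<le> exp (- l * m)" "g z * exp (l * (1 - m)) \<le> exp (l * (1 - m))"
      using g01[of z] by (auto intro!: mult_left_le_one_le)
    show "\<bar>H z\<bar> \<le> exp (- l * m) + exp (l * (1 - m)) + 1"
    proof -
      have "H z = (if z \<in> A then (1 - g z) * exp (- l * m) + g z * exp (l * (1 - m)) else 1)"
        by (simp add: H_def)
      then show ?thesis using H0[of z] a exp_gt_zero[of "- l * m"] exp_gt_zero[of "l * (1 - m)"]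
        by (smt (verit))
    qed
  qed
  have IH: "integral\<^sup>L M H = exp (- l * m) * (q - m * q) + exp (l * (1 - m)) * (m * q) + (1 - q)"
  proof -
    have "H = (\<lambda>z. exp (- l * m) * (indicator A z - G z) + exp (l * (1 - m)) * G z + (1 - indicator A z))"
      by (auto simp: H_def G_def fun_eq_iff algebra_simps)
    moreover note intA
    ultimately show ?thesis
      using intG sets.sets_into_space[OF Am]
      by (simp add: integral_add integral_diff prob_space mq q_def Int_absorb2 integrable_diff)
  qed
  have a1: "1 + m * (exp l - 1) > 0" using m0 by (smt (verit) exp_ge_zero mult_nonneg_nonneg one_le_exp_iff l)
  have hl: "- l * m + ln (1 + m * (exp l - 1)) \<le> l\<^sup>2 / 8" by (rule Hoeffdings_lemma_aux[OF l m0(1)])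
  have e: "exp (- l * m) * (1 + m * (exp l - 1)) = exp (- l * m + ln (1 + m * (exp l - 1)))"
    using a1 by (simp only: exp_add exp_ln)
  have hh: "exp (- l * m) * (1 + m * (exp l - 1)) \<le> exp (l\<^sup>2 / 8)"
    unfolding e exp_le_cancel_iff by (rule hl)
  have "integral\<^sup>L M H = q * (exp (- l * m) * (1 + m * (exp l - 1))) + (1 - q)"
    unfolding IH by (simp add: algebra_simps exp_diff exp_minus divide_inverse)
  also have "\<dots> \<le> q * exp (l\<^sup>2 / 8) + (1 - q)" using hh q0 by simp
  also have "\<dots> = 1 + q * (exp (l\<^sup>2 / 8) - 1)" by (simp add: algebra_simps)
  also have "\<dots> \<le> exp (q * (exp (l\<^sup>2 / 8) - 1))" by (rule exp_ge_add_one_self)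
  finally have IHb: "integral\<^sup>L M H \<le> exp (q * (exp (l\<^sup>2 / 8) - 1))" .
  have "(\<integral>\<^sup>+z. ennreal (exp (l * (indicator A z * (g z - m)))) \<partial>M) \<le> (\<integral>\<^sup>+z. ennreal (H z) \<partial>M)"
    by (intro nn_integral_mono ennreal_leI pw)
  also have "\<dots> = ennreal (integral\<^sup>L M H)" by (rule nn_integral_eq_integral[OF intH]) (simp add: H0)
  also have "\<dots> \<le> ennreal (exp (q * (exp (l\<^sup>2 / 8) - 1)))" using IHb by simp
  finally show ?thesis by (simp add: q_def)
qed

end

locale calib =
  fixes MX :: "'x measure" and D :: "('x \<times> 'k::finite) measure"
    and flgt :: "'x \<Rightarrow> real^'k" and hat :: "'x \<Rightarrow> 'k"
    and Lcal :: "real^'k \<Rightarrow> real^'k \<Rightarrow> real"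
    and Lf Lc :: real
  assumes D: "prob_space D"
    and sD: "sets D = sets (MX \<Otimes>\<^sub>M count_space UNIV)"
    and fm: "flgt \<in> borel_measurable MX"
    and hm: "hat \<in> MX \<rightarrow>\<^sub>M count_space UNIV"
    and fb: "\<forall>x. norm (flgt x) \<le> Lf"
    and L01: "\<forall>y u. 0 \<le> Lcal y u \<and> Lcal y u \<le> 1"
    and Llip: "\<forall>y u v. \<bar>Lcal y u - Lcal y v\<bar> \<le> Lc * norm (u - v)"
begin

definition "ell t z = Lcal (onehot (snd z)) (temp_scaled flgt t (fst z))"
definition "A k = {z\<in>space D. hat (fst z) = k}"
definition "q k = measure D (A k)"
definition "mu k t = cond_calib_loss Lcal flgt hat D k t"

lemma Lf0: "0 \<le> Lf" using fb norm_ge_zero order.trans by blast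

lemma Lc0: "0 \<le> Lc"
proof -
  have "0 \<le> Lc * norm ((0::real^'k) - axis undefined 1)" using Llip by (meson abs_ge_zero order.trans)
  moreover have "norm ((0::real^'k) - axis undefined 1) > 0" by (simp add: axis_eq_0_iff)
  ultimately show ?thesis by (simp add: zero_le_mult_iff)
qed

lemma ell01: "0 \<le> ell t z" "ell t z \<le> 1" using L01 by (auto simp: ell_def)

lemma ell_lip: "\<bar>ell t z - ell t' z\<bar> \<le> 2 * Lf * Lc * \<bar>t - t'\<bar>"
proof -
  have "\<bar>ell t z - ell t' z\<bar> \<le> Lc * norm (temp_scaled flgt t (fst z) - temp_scaled flgt t' (fst z))"
    using Llip by (simp add: ell_def)
  also have "\<dots> \<le> Lc * (2 * norm (flgt (fst z)) * \<bar>t - t'\<bar>)"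
    by (rule mult_left_mono[OF _ Lc0]) (simp add: temp_scaled_def softmax_lip)
  also have "\<dots> \<le> Lc * (2 * Lf * \<bar>t - t'\<bar>)"
    using fb Lc0 by (intro mult_left_mono mult_right_mono) auto
  finally show ?thesis by (simp add: mult_ac)
qed

lemma Lcal_cont: "continuous_on UNIV (Lcal y)"
proof (rule lipschitz_on_continuous_on)
  show "Lc-lipschitz_on UNIV (Lcal y)"
    using Llip Lc0 by (auto simp: lipschitz_on_def dist_norm)
qed

lemma A_sets[measurable]: "A k \<in> sets D"
proof -
  have "(\<lambda>z. hat (fst z)) \<in> measurable (MX \<Otimes>\<^sub>M count_space UNIV) (count_space UNIV)"
    using hm by measurable
  then have "(\<lambda>z. hat (fst z)) \<in> measurable D (count_space UNIV)"
    using measurable_cong_sets[OF sD refl] by blast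
  then have "(\<lambda>z. hat (fst z)) -` {k} \<inter> space D \<in> sets D" by (rule measurable_sets) auto
  moreover have "A k = (\<lambda>z. hat (fst z)) -` {k} \<inter> space D" by (auto simp: A_def)
  ultimately show ?thesis by simp
qed

lemma ell_meas[measurable]: "ell t \<in> borel_measurable D"
proof -
  have "(\<lambda>z. Lcal (onehot (snd z)) (temp_scaled flgt t (fst z))) \<in> borel_measurable (MX \<Otimes>\<^sub>M count_space UNIV)"
  proof (rule measurable_compose_countable'[where I=UNIV and g=snd and f="\<lambda>y z. Lcal (onehot y) (temp_scaled flgt t (fst z))"])
    fix y :: 'k
    have "(\<lambda>x. Lcal (onehot y) (softmax (t *\<^sub>R flgt x))) \<in> borel_measurable MX"
      by (intro borel_measurable_continuous_on[OF Lcal_cont] borel_measurable_continuous_on[OF softmax_cont])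
        (use fm in measurable)
    then show "(\<lambda>z. Lcal (onehot y) (temp_scaled flgt t (fst z))) \<in> borel_measurable (MX \<Otimes>\<^sub>M count_space UNIV)"
      unfolding temp_scaled_def by measurable
  qed auto
  then show ?thesis unfolding ell_def[abs_def] by (subst measurable_cong_sets[OF sD refl]) simp
qed

end




lemma chernoff_PiM:
  fixes D :: "'a measure" and W :: "'a \<Rightarrow> real"
  assumes D: "prob_space D" and Wm[measurable]: "W \<in> borel_measurable D" and l: "l > 0"
    and B: "(\<integral>\<^sup>+z. ennreal (exp (l * W z)) \<partial>D) \<le> ennreal B" and B0: "0 \<le> B"
  shows "measure (PiM {..<n} (\<lambda>_. D)) {S\<in>space (PiM {..<n} (\<lambda>_. D)). (\<Sum>i<n. W (S i)) \<ge> a}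
      \<le> exp (- l * a) * B ^ n"
proof -
  define P where "P = PiM {..<n} (\<lambda>_. D)"
  interpret D: prob_space D by (rule D)
  interpret P: prob_space P unfolding P_def by (intro prob_space_PiM) (simp add: D)
  interpret ps: product_sigma_finite "\<lambda>_. D" by standard
  have fm[measurable]: "(\<lambda>S. \<Sum>i<n. W (S i)) \<in> borel_measurable P" unfolding P_def by measurable
  have sp: "space P \<in> sets P" by simp
  have ch: "emeasure P {S\<in>space P. (\<Sum>i<n. W (S i)) \<ge> a}
     \<le> ennreal (exp (- l * a)) * (\<integral>\<^sup>+S. ennreal (exp (l * (\<Sum>i<n. W (S i)))) * indicator (space P) S \<partial>P)"
    by (rule Chernoff_ineq_nn_integral_ge[OF l sp]) simp
  have "(\<integral>\<^sup>+S. ennreal (exp (l * (\<Sum>i<n. W (S i)))) * indicator (space P) S \<partial>P)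
      = (\<integral>\<^sup>+S. (\<Prod>i\<in>{..<n}. ennreal (exp (l * W (S i)))) \<partial>P)"
    by (intro nn_integral_cong) (simp add: sum_distrib_left exp_sum prod_ennreal)
  also have "\<dots> = (\<Prod>i\<in>{..<n}. (\<integral>\<^sup>+z. ennreal (exp (l * W z)) \<partial>D))"
    unfolding P_def by (rule ps.product_nn_integral_prod) auto
  also have "\<dots> \<le> (\<Prod>i\<in>{..<n}. ennreal B)"
    by (intro prod_mono_ennreal B)
  also have "\<dots> = ennreal (B ^ n)" by (simp add: B0 ennreal_power)
  finally have "emeasure P {S\<in>space P. (\<Sum>i<n. W (S i)) \<ge> a} \<le> ennreal (exp (- l * a)) * ennreal (B ^ n)"
    using ch by (meson mult_left_mono order.trans zero_le)
  hence "emeasure P {S\<in>space P. (\<Sum>i<n. W (S i)) \<ge> a} \<le> ennreal (exp (- l * a) * B ^ n)"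
    by (simp add: B0 ennreal_mult)
  then show ?thesis unfolding P_def[symmetric]
    by (simp add: P.emeasure_eq_measure B0)
qed

context calib begin

sublocale prob_space D by (rule D)

lemma ell_diff1: "\<bar>ell t z - ell t' z\<bar> \<le> 1"
  using ell01[of t z] ell01[of t' z] by linarith

lemma ell_int: "integrable D (ell t)" by (rule bint[where B=1]) (use ell01 in auto)

lemma SI_eq: "(LINT z:A k|D. ell t z) = integral\<^sup>L D (\<lambda>z. indicator (A k) z * ell t z)"
  by (simp add: set_lebesgue_integral_def)

lemma mu_def2: "mu k t = (LINT z:A k|D. ell t z) / q k"
  by (simp add: mu_def cond_calib_loss_def ell_def[abs_def] A_def[symmetric] q_def)

lemma SI_mu: "q k > 0 \<Longrightarrow> (LINT z:A k|D. ell t z) = q k * mu k t"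
  by (simp add: mu_def2)

lemma intAk: "integrable D (\<lambda>z. indicator (A k) z * ell t z)"
  by (rule bint[where B=1]) (use ell01 in \<open>auto simp: indicator_def\<close>)

lemma SI_bounds: "0 \<le> (LINT z:A k|D. ell t z)" "(LINT z:A k|D. ell t z) \<le> q k"
proof -
  show "0 \<le> (LINT z:A k|D. ell t z)" unfolding SI_eq
    by (rule Bochner_Integration.integral_nonneg) (use ell01 in auto)
  have "integral\<^sup>L D (\<lambda>z. indicator (A k) z * ell t z) \<le> integral\<^sup>L D (indicator (A k))"
    by (rule integral_mono[OF intAk]) (auto intro!: bint[where B=1] simp: indicator_def ell01)
  also have "\<dots> = q k" using sets.sets_into_space[OF A_sets] by (simp add: q_def Int_absorb2)
  finally show "(LINT z:A k|D. ell t z) \<le> q k" unfolding SI_eq .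
qed

lemma mu01: "0 \<le> mu k t" "mu k t \<le> 1"
  using SI_bounds[of k t] by (auto simp: mu_def2 divide_le_eq_1)

lemma mu_lip: "q k > 0 \<Longrightarrow> \<bar>mu k t - mu k t'\<bar> \<le> 2 * Lf * Lc * \<bar>t - t'\<bar>"
proof -
  assume q: "q k > 0"
  define c where "c = 2 * Lf * Lc * \<bar>t - t'\<bar>"
  have "\<bar>(LINT z:A k|D. ell t z) - (LINT z:A k|D. ell t' z)\<bar>
      = \<bar>integral\<^sup>L D (\<lambda>z. indicator (A k) z * (ell t z - ell t' z))\<bar>"
    unfolding SI_eq right_diff_distrib Bochner_Integration.integral_diff[OF intAk intAk] ..
  also have "\<dots> \<le> integral\<^sup>L D (\<lambda>z. \<bar>indicator (A k) z * (ell t z - ell t' z)\<bar>)"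
    by (rule integral_abs_bound)
  also have "\<dots> \<le> integral\<^sup>L D (\<lambda>z. indicator (A k) z * c)"
  proof (rule integral_mono)
    show "integrable D (\<lambda>z. \<bar>indicator (A k) z * (ell t z - ell t' z)\<bar>)"
      by (rule bint[where B=1]) (measurable, auto simp: indicator_def ell_diff1)
    show "integrable D (\<lambda>z. indicator (A k) z * c)"
      by (rule bint[where B="\<bar>c\<bar>"]) (measurable, auto simp: indicator_def)
    fix z show "\<bar>indicator (A k) z * (ell t z - ell t' z)\<bar> \<le> indicator (A k) z * c"
      by (auto simp: indicator_def ell_lip c_def)
  qed
  also have "\<dots> = q k * c" using sets.sets_into_space[OF A_sets] by (simp add: q_def Int_absorb2)
  finally have "\<bar>q k * mu k t - q k * mu k t'\<bar> \<le> q k * c" using SI_mu[OF q] by simp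
  then have "q k * \<bar>mu k t - mu k t'\<bar> \<le> q k * c" by (simp add: abs_mult right_diff_distrib[symmetric] q less_imp_le)
  then show ?thesis using q by (simp add: c_def)
qed


abbreviation "PP n \<equiv> PiM {..<n} (\<lambda>_. D)"

lemma qprob: "q k = prob (A k)" by (simp add: q_def)

lemma dev_tail:
  assumes q: "q k > 0" and l: "l > 0"
  shows "measure (PP n) {S\<in>space (PP n). (\<Sum>i<n. indicator (A k) (S i) * (ell t (S i) - mu k t)) \<ge> s}
    \<le> exp (- l * s) * exp (q k * (exp (l\<^sup>2/8) - 1)) ^ n"
proof (rule chernoff_PiM[OF D _ l])
  show "(\<lambda>z. indicator (A k) z * (ell t z - mu k t)) \<in> borel_measurable D" by measurable
  show "(\<integral>\<^sup>+z. ennreal (exp (l * (indicator (A k) z * (ell t z - mu k t)))) \<partial>D) \<le> ennreal (exp (q k * (exp (l\<^sup>2/8) - 1)))"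
    unfolding qprob by (rule mgf_one) (use ell01 q l in \<open>auto simp: qprob mu_def2\<close>)
qed simp

lemma SI_compl: "(LINT z:A k|D. 1 - ell t z) = q k - (LINT z:A k|D. ell t z)"
proof -
  have iA: "integrable D (indicator (A k) :: _ \<Rightarrow> real)" by (rule bint[where B=1]) (auto simp: indicator_def)
  have "(LINT z:A k|D. 1 - ell t z) = integral\<^sup>L D (\<lambda>z. indicator (A k) z - indicator (A k) z * ell t z)"
    by (simp add: set_lebesgue_integral_def right_diff_distrib)
  also have "\<dots> = q k - (LINT z:A k|D. ell t z)"
    unfolding SI_eq Bochner_Integration.integral_diff[OF iA intAk]
    using sets.sets_into_space[OF A_sets] by (simp add: q_def Int_absorb2)
  finally show ?thesis .
qed

lemma dev_tail2:
  assumes q: "q k > 0" and l: "l > 0"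
  shows "measure (PP n) {S\<in>space (PP n). (\<Sum>i<n. indicator (A k) (S i) * (ell t (S i) - mu k t)) \<le> - s}
    \<le> exp (- l * s) * exp (q k * (exp (l\<^sup>2/8) - 1)) ^ n"
proof -
  have "measure (PP n) {S\<in>space (PP n). (\<Sum>i<n. indicator (A k) (S i) * ((1 - ell t (S i)) - (1 - mu k t))) \<ge> s}
    \<le> exp (- l * s) * exp (q k * (exp (l\<^sup>2/8) - 1)) ^ n"
  proof (rule chernoff_PiM[OF D _ l])
    show "(\<lambda>z. indicator (A k) z * ((1 - ell t z) - (1 - mu k t))) \<in> borel_measurable D" by measurable
    have m: "1 - mu k t = (LINT z:A k|D. 1 - ell t z) / prob (A k)"
      using q by (simp add: SI_compl mu_def2 qprob[symmetric] field_simps)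
    show "(\<integral>\<^sup>+z. ennreal (exp (l * (indicator (A k) z * ((1 - ell t z) - (1 - mu k t))))) \<partial>D) \<le> ennreal (exp (q k * (exp (l\<^sup>2/8) - 1)))"
      unfolding qprob by (rule mgf_one[OF _ _ _ _ m]) (use ell01 q l in \<open>auto simp: qprob\<close>)
  qed simp
  moreover have "{S\<in>space (PP n). (\<Sum>i<n. indicator (A k) (S i) * ((1 - ell t (S i)) - (1 - mu k t))) \<ge> s}
     = {S\<in>space (PP n). (\<Sum>i<n. indicator (A k) (S i) * (ell t (S i) - mu k t)) \<le> - s}"
  proof -
    have "\<And>S. (\<Sum>i<n. indicator (A k) (S i) * ((1 - ell t (S i)) - (1 - mu k t))) = - (\<Sum>i<n. indicator (A k) (S i) * (ell t (S i) - mu k t))"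
      by (simp add: sum_negf[symmetric] algebra_simps)
    then show ?thesis by auto
  qed
  ultimately show ?thesis by simp
qed

lemma cnt_tail:
  shows "measure (PP n) {S\<in>space (PP n). (\<Sum>i<n. indicator (A k) (S i)) \<le> real n * q k / 2}
    \<le> exp (- (real n * q k / 8))"
proof -
  have l: "ln 2 > (0::real)" by simp
  have iA: "integrable D (indicator (A k) :: _ \<Rightarrow> real)" by (rule bint[where B=1]) (auto simp: indicator_def)
  have B: "(\<integral>\<^sup>+z. ennreal (exp (ln 2 * (- indicator (A k) z))) \<partial>D) \<le> ennreal (1 - q k / 2)"
  proof -
    have "(\<integral>\<^sup>+z. ennreal (exp (ln 2 * (- indicator (A k) z))) \<partial>D) = (\<integral>\<^sup>+z. ennreal (1 - indicator (A k) z / 2) \<partial>D)"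
      by (intro nn_integral_cong) (auto simp: indicator_def exp_minus)
    also have "\<dots> = ennreal (integral\<^sup>L D (\<lambda>z. 1 - indicator (A k) z / 2))"
      by (rule nn_integral_eq_integral[OF bint[where B=1]]) (measurable, auto simp: indicator_def)
    also have "integral\<^sup>L D (\<lambda>z. 1 - indicator (A k) z / 2) = 1 - q k / 2"
    proof -
      have i2: "integrable D (\<lambda>z. indicator (A k) z / 2 :: real)" using iA by simp
      show ?thesis using sets.sets_into_space[OF A_sets]
        by (simp add: Bochner_Integration.integral_diff[OF _ i2] q_def Int_absorb2 prob_space)
    qed
    finally show ?thesis by simp
  qed
  have q01: "0 \<le> q k" "q k \<le> 1" by (auto simp: q_def)
  have "measure (PP n) {S\<in>space (PP n). (\<Sum>i<n. - indicator (A k) (S i)) \<ge> - (real n * q k / 2)}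
    \<le> exp (- ln 2 * (- (real n * q k / 2))) * (1 - q k / 2) ^ n"
    by (rule chernoff_PiM[OF D _ l B]) (use q01 in auto)
  moreover have "{S\<in>space (PP n). (\<Sum>i<n. - indicator (A k) (S i)) \<ge> - (real n * q k / 2)}
     = {S\<in>space (PP n). (\<Sum>i<n. indicator (A k) (S i)) \<le> real n * q k / 2}"
    by (auto simp: sum_negf)
  moreover have "exp (- ln 2 * (- (real n * q k / 2))) * (1 - q k / 2) ^ n \<le> exp (- (real n * q k / 8))"
  proof -
    have "(1 - q k / 2) ^ n \<le> exp (- q k / 2) ^ n"
      using exp_ge_add_one_self[of "- q k / 2"] q01 by (intro power_mono) auto
    also have "\<dots> = exp (- (real n * q k / 2))" by (simp add: exp_of_nat_mult[symmetric])
    finally have "exp (- ln 2 * (- (real n * q k / 2))) * (1 - q k / 2) ^ n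
       \<le> exp (ln 2 * (real n * q k / 2)) * exp (- (real n * q k / 2))" by simp
    also have "\<dots> = exp ((ln 2 - 1) * (real n * q k / 2))" by (simp add: exp_add[symmetric] algebra_simps)
    also have "\<dots> \<le> exp (- (real n * q k / 8))"
    proof -
      have x0: "0 \<le> real n * q k / 2" using q01 by simp
      have "(ln 2 - 1) * (real n * q k / 2) \<le> (- 1/4) * (real n * q k / 2)"
        by (rule mult_right_mono[OF _ x0]) (use ln2_le_25_over_36 in simp)
      then show ?thesis by simp
    qed
    finally show ?thesis .
  qed
  ultimately show ?thesis by simp
qed

end




lemma exp_le_1_2x: fixes x :: real assumes "0 \<le> x" "x \<le> 1/2" shows "exp x \<le> 1 + 2 * x"
proof -
  have "1 - x \<le> exp (- x)" using exp_ge_add_one_self[of "- x"] by simp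
  hence "exp x * (1 - x) \<le> exp x * exp (- x)" by (intro mult_left_mono) auto
  hence "exp x * (1 - x) \<le> 1" by (simp add: exp_minus)
  moreover have "1 \<le> (1 + 2 * x) * (1 - x)"
  proof -
    have "0 \<le> x * (1 - 2 * x)" using assms by (intro mult_nonneg_nonneg) auto
    moreover have "(1 + 2 * x) * (1 - x) = 1 + x * (1 - 2 * x)" by (simp add: algebra_simps)
    ultimately show ?thesis by linarith
  qed
  ultimately have "exp x * (1 - x) \<le> (1 + 2 * x) * (1 - x)" by linarith
  then show ?thesis using assms by (simp add: mult_le_cancel_right)
qed

lemma cover:
  fixes am ap c :: real
  assumes amp: "am \<le> ap" and c: "0 \<le> c" and n: "n > 0"
  shows "\<exists>T. finite T \<and> T \<noteq> {} \<and> real (card T) \<le> 1 + 2 * (ap - am) * sqrt (real n) * c \<and>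
     (\<forall>t\<in>{am..ap}. \<exists>t'\<in>T. c * \<bar>t - t'\<bar> \<le> 1 / (2 * sqrt (real n)))"
proof -
  define X where "X = 2 * (ap - am) * sqrt (real n) * c"
  have X0: "X \<ge> 0" using amp c by (simp add: X_def)
  have sn: "sqrt (real n) > 0" using n by simp
  show ?thesis
  proof (cases "X = 0")
    case True
    have "c * (ap - am) = 0" using True sn by (auto simp: X_def)
    then have "\<forall>t\<in>{am..ap}. c * \<bar>t - am\<bar> \<le> 1 / (2 * sqrt (real n))"
      using c sn by (auto intro!: order.trans[OF mult_left_mono[of "\<bar>_ - am\<bar>" "ap - am" c]])
    moreover have "real (card {am}) \<le> 1 + 2 * (ap - am) * sqrt (real n) * c" using X0 by (simp add: X_def)
    ultimately show ?thesis by (intro exI[of _ "{am}"]) auto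
  next
    case False
    hence Xp: "X > 0" using X0 by simp
    hence apm: "ap - am > 0" using X_def c sn by (auto simp: zero_less_mult_iff)
    define w where "w = (ap - am) / X"
    have wp: "w > 0" using Xp apm by (simp add: w_def)
    define M where "M = nat \<lfloor>X\<rfloor>"
    define T where "T = (\<lambda>j::nat. am + real j * w) ` {..M}"
    have cT: "real (card T) \<le> 1 + X"
    proof -
      have "card T \<le> card {..M}" unfolding T_def by (rule card_image_le) simp
      hence "real (card T) \<le> real M + 1" by simp
      moreover have "real M \<le> X" using X0 by (simp add: M_def)
      ultimately show ?thesis by simp
    qed
    have cnz: "c \<noteq> 0" using Xp by (auto simp: X_def)
    have cw: "c * w = 1 / (2 * sqrt (real n))"
      using apm sn Xp cnz by (simp add: w_def X_def field_simps)
    have "\<forall>t\<in>{am..ap}. \<exists>t'\<in>T. c * \<bar>t - t'\<bar> \<le> 1 / (2 * sqrt (real n))"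
    proof
      fix t assume t: "t \<in> {am..ap}"
      define r where "r = (t - am) / w"
      have r0: "r \<ge> 0" using t wp by (simp add: r_def)
      have rX: "r \<le> X" using t wp Xp apm by (simp add: r_def w_def field_simps)
      define j where "j = nat \<lfloor>r\<rfloor>"
      have jM: "j \<le> M" unfolding j_def M_def using rX by (simp add: nat_mono floor_mono)
      have j1: "real j \<le> r" "r < real j + 1" using r0 by (auto simp: j_def)
      have "t - (am + real j * w) = (r - real j) * w" using wp by (simp add: r_def field_simps)
      hence d: "0 \<le> t - (am + real j * w)" "t - (am + real j * w) \<le> w"
        using j1 wp by (auto intro: mult_left_le_one_le)
      have "c * \<bar>t - (am + real j * w)\<bar> \<le> c * w" using d c by (simp add: mult_left_mono)
      moreover have "am + real j * w \<in> T" using jM by (auto simp: T_def)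
      ultimately show "\<exists>t'\<in>T. c * \<bar>t - t'\<bar> \<le> 1 / (2 * sqrt (real n))" using cw by auto
    qed
    then show ?thesis using cT by (intro exI[of _ T]) (auto simp: T_def X_def)
  qed
qed

lemma determ:
  fixes E mu :: "real \<Rightarrow> real" and N c eps d am ap a :: real and T :: "real set"
  assumes N: "N > 0"
    and E: "\<And>t t'. \<bar>E t - E t'\<bar> \<le> N * (c * \<bar>t - t'\<bar>)"
    and mu: "\<And>t t'. \<bar>mu t - mu t'\<bar> \<le> c * \<bar>t - t'\<bar>"
    and dev: "\<And>t'. t' \<in> T \<Longrightarrow> \<bar>E t' - N * mu t'\<bar> \<le> N * eps"
    and cov: "\<And>t. t \<in> {am..ap} \<Longrightarrow> \<exists>t'\<in>T. c * \<bar>t - t'\<bar> \<le> d"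
    and a: "a \<in> {am..ap}" and amin: "\<And>t. t \<in> {am..ap} \<Longrightarrow> E a \<le> E t"
    and t: "t \<in> {am..ap}"
  shows "mu a \<le> mu t + 2 * eps + 4 * d"
proof -
  have gen: "\<bar>E u / N - mu u\<bar> \<le> eps + 2 * d" if u: "u \<in> {am..ap}" for u
  proof -
    obtain t' where t': "t' \<in> T" "c * \<bar>u - t'\<bar> \<le> d" using cov[OF u] by blast
    have eq: "E u - N * mu u = (E u - E t') + (E t' - N * mu t') + N * (mu t' - mu u)" by (simp add: algebra_simps)
    have "\<bar>E u - N * mu u\<bar> \<le> \<bar>E u - E t'\<bar> + \<bar>E t' - N * mu t'\<bar> + \<bar>N * (mu t' - mu u)\<bar>"
      unfolding eq by (rule order.trans[OF abs_triangle_ineq add_mono[OF abs_triangle_ineq order.refl]])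
    hence "\<bar>E u - N * mu u\<bar> \<le> \<bar>E u - E t'\<bar> + \<bar>E t' - N * mu t'\<bar> + N * \<bar>mu t' - mu u\<bar>"
      using N by (simp add: abs_mult)
    also have "\<dots> \<le> N * d + N * eps + N * d"
    proof (intro add_mono)
      show "\<bar>E u - E t'\<bar> \<le> N * d" using E[of u t'] t'(2) N by (meson mult_left_mono order.trans less_imp_le)
      show "\<bar>E t' - N * mu t'\<bar> \<le> N * eps" by (rule dev[OF t'(1)])
      show "N * \<bar>mu t' - mu u\<bar> \<le> N * d" using mu[of t' u] t'(2) N
        by (intro mult_left_mono) (auto simp: abs_minus_commute)
    qed
    finally have "\<bar>E u - N * mu u\<bar> \<le> N * (eps + 2 * d)" by (simp add: algebra_simps)
    moreover have "\<bar>E u / N - mu u\<bar> = \<bar>E u - N * mu u\<bar> / N"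
      using N by (simp add: field_simps abs_div_pos[symmetric])
    ultimately show ?thesis using N by (simp add: divide_le_eq mult.commute)
  qed
  have "E a / N \<le> E t / N" using amin[OF t] N by (simp add: divide_right_mono)
  then show ?thesis using gen[OF a] gen[OF t] by linarith
qed

lemma num_a:
  fixes p Nt X dl :: real and n :: nat
  assumes p: "0 < p" "p \<le> 1" and n: "n > 0" and dl: "0 < dl" "dl < 1" and Nt: "1 \<le> Nt" "Nt \<le> 1 + X"
  shows "4 * sqrt (ln (2 * Nt / dl) / (real n * p)) + 4 * (1 / (2 * sqrt (real n)))
     \<le> 6 * sqrt (ln (1 + X) / (p * real n)) + 12 * sqrt (ln (2 / dl) / (p * real n))"
proof -
  define A where "A = ln (1 + X)"
  define B where "B = ln (2 / dl)"
  have np: "real n * p > 0" using p n by simp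
  have B23: "B \<ge> 2/3"
  proof -
    have "ln 2 \<le> ln (2 / dl)" using dl by (subst ln_le_cancel_iff) (auto simp: field_simps)
    then show ?thesis using ln2_ge_two_thirds by (simp add: B_def)
  qed
  have A0: "A \<ge> 0" using Nt by (simp add: A_def)
  have LgAB: "ln (2 * Nt / dl) \<le> A + B"
  proof -
    have "ln (2 * Nt / dl) = ln Nt + ln (2 / dl)" 
  proof -
    have e: "2 * Nt / dl = Nt * (2 / dl)" by simp
    show ?thesis unfolding e by (rule ln_mult_pos) (use Nt dl in auto)
  qed
    also have "ln Nt \<le> A" using Nt by (simp add: A_def)
    finally show ?thesis by (simp add: B_def)
  qed
  have "sqrt (ln (2 * Nt / dl) / (real n * p)) \<le> sqrt ((A + B) / (real n * p))"
    using LgAB np by (simp add: divide_right_mono)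
  also have "\<dots> = sqrt (A / (real n * p) + B / (real n * p))" by (simp add: add_divide_distrib)
  also have "\<dots> \<le> sqrt (A / (real n * p)) + sqrt (B / (real n * p))"
    using A0 B23 np by (intro sqrt_add_le_add_sqrt) auto
  finally have s1: "sqrt (ln (2 * Nt / dl) / (real n * p)) \<le> sqrt (A / (real n * p)) + sqrt (B / (real n * p))" .
  have s2: "1 / (4 * sqrt (real n)) \<le> sqrt (B / (real n * p))"
  proof (rule real_le_rsqrt)
    have "(1 / (4 * sqrt (real n)))\<^sup>2 = 1 / (16 * real n)" using n by (simp add: power2_eq_square)
    also have "\<dots> \<le> B / (real n * p)"
    proof -
      have "real n * p \<le> real n * 1" using p by (intro mult_left_mono) auto
      also have "\<dots> \<le> 16 * real n * B" using B23 n by simp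
      finally show ?thesis using np n by (simp add: field_simps)
    qed
    finally show "(1 / (4 * sqrt (real n)))\<^sup>2 \<le> B / (real n * p)" .
  qed
  have h: "4 * (1 / (2 * sqrt (real n))) = 8 * (1 / (4 * sqrt (real n)))" by simp
  have pn: "real n * p = p * real n" by simp
  have sA: "sqrt (A / (p * real n)) \<ge> 0" using A0 p n by simp
  show ?thesis using s1 s2 sA h unfolding A_def[symmetric] B_def[symmetric] pn by linarith
qed

lemma num_b:
  fixes p Nt X dl :: real and n :: nat
  assumes p: "0 < p" and n: "n > 0" and dl: "0 < dl" "dl < 1" and Nt: "1 \<le> Nt" "Nt \<le> 1 + X"
    and big: "ln (2 * Nt / dl) > real n * p"
  shows "1 \<le> 6 * sqrt (ln (1 + X) / (p * real n)) + 12 * sqrt (ln (2 / dl) / (p * real n))"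
proof -
  define A where "A = ln (1 + X)"
  define B where "B = ln (2 / dl)"
  have np: "real n * p > 0" using p n by simp
  have B0: "B \<ge> 0" using dl by (simp add: B_def)
  have A0: "A \<ge> 0" using Nt by (simp add: A_def)
  have "ln (2 * Nt / dl) = ln Nt + ln (2 / dl)" 
  proof -
    have e: "2 * Nt / dl = Nt * (2 / dl)" by simp
    show ?thesis unfolding e by (rule ln_mult_pos) (use Nt dl in auto)
  qed
  also have "ln Nt \<le> A" using Nt by (simp add: A_def)
  finally have "real n * p < A + B" using big by (simp add: B_def)
  hence "1 < (A + B) / (real n * p)" using np by (simp add: less_divide_eq)
  hence "1 < A / (real n * p) + B / (real n * p)" by (simp add: add_divide_distrib)
  hence "A / (real n * p) \<ge> 1/2 \<or> B / (real n * p) \<ge> 1/2" by linarith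
  moreover have "sqrt (A / (real n * p)) \<ge> 0" "sqrt (B / (real n * p)) \<ge> 0" using A0 B0 np by auto
  moreover have "x \<ge> 1/2 \<Longrightarrow> 1/6 \<le> sqrt x" for x :: real by (rule real_le_rsqrt) (simp add: power2_eq_square)
  ultimately have "1 \<le> 6 * sqrt (A / (real n * p)) + 12 * sqrt (B / (real n * p))"
  proof -
    assume disj: "A / (real n * p) \<ge> 1/2 \<or> B / (real n * p) \<ge> 1/2"
      and sq: "sqrt (A / (real n * p)) \<ge> 0" "sqrt (B / (real n * p)) \<ge> 0"
      and r: "\<And>x::real. x \<ge> 1/2 \<Longrightarrow> 1/6 \<le> sqrt x"
    from disj show ?thesis
    proof
      assume "A / (real n * p) \<ge> 1/2" from r[OF this] sq show ?thesis by linarith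
    next
      assume "B / (real n * p) \<ge> 1/2" from r[OF this] sq show ?thesis by linarith
    qed
  qed
  then show ?thesis by (simp add: A_def B_def mult.commute)
qed

context calib begin

lemma dev_both:
  assumes q: "q k > 0" and Lg: "Lg > 0" "Lg \<le> real n * q k" and n: "n > 0"
  shows "measure (PP n) {S\<in>space (PP n). \<bar>\<Sum>i<n. indicator (A k) (S i) * (ell t (S i) - mu k t)\<bar> > sqrt (real n * q k * Lg)}
    \<le> 2 * exp (- Lg)"
proof -
  define s where "s = sqrt (real n * q k * Lg)"
  define l where "l = 2 * sqrt (Lg / (real n * q k))"
  define W where "W = (\<lambda>S. \<Sum>i<n. indicator (A k) (S i) * (ell t (S i) - mu k t))"
  have nq: "real n * q k > 0" using q n by simp
  have l0: "l > 0" using Lg nq by (simp add: l_def)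
  have ls: "l * s = 2 * Lg"
  proof -
    have "l * s = 2 * (sqrt (Lg / (real n * q k)) * sqrt (real n * q k * Lg))" by (simp add: l_def s_def)
    also have "\<dots> = 2 * sqrt (Lg / (real n * q k) * (real n * q k * Lg))" by (simp only: real_sqrt_mult)
    also have "Lg / (real n * q k) * (real n * q k * Lg) = Lg ^ 2"
    proof -
      have "Lg / (real n * q k) * (real n * q k * Lg) = (Lg / (real n * q k) * (real n * q k)) * Lg" by (simp only: mult.assoc)
      also have "Lg / (real n * q k) * (real n * q k) = Lg" using q n by simp
      finally show ?thesis by (simp add: power2_eq_square)
    qed
    finally show ?thesis using Lg by simp
  qed
  have sq: "sqrt (Lg / (real n * q k)) ^ 2 = Lg / (real n * q k)" using Lg nq by simp
  have l2: "l\<^sup>2 / 8 = Lg / (2 * (real n * q k))" unfolding l_def power_mult_distrib sq by simp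
  have x: "0 \<le> l\<^sup>2 / 8" "l\<^sup>2 / 8 \<le> 1/2" unfolding l2 using Lg nq by (auto simp: divide_le_eq)
  have bnd: "exp (- l * s) * exp (q k * (exp (l\<^sup>2/8) - 1)) ^ n \<le> exp (- Lg)"
  proof -
    have e: "\<And>a b::real. exp a * exp b = exp (a + b)" by (simp add: exp_add)
    have A: "exp (- l * s) * exp (q k * (exp (l\<^sup>2/8) - 1)) ^ n = exp (- l * s + real n * (q k * (exp (l\<^sup>2/8) - 1)))"
      by (simp only: exp_of_nat_mult[symmetric] e)
    have "real n * (q k * (exp (l\<^sup>2/8) - 1)) \<le> real n * (q k * (2 * (l\<^sup>2 / 8)))"
      using exp_le_1_2x[OF x] q by (intro mult_left_mono) auto
    also have "real n * (q k * (2 * (l\<^sup>2 / 8))) = Lg" unfolding l2 using q n by simp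
    finally have "real n * (q k * (exp (l\<^sup>2/8) - 1)) \<le> Lg" .
    then show ?thesis unfolding A using ls by simp
  qed
  interpret P: prob_space "PP n" by (rule prob_space_PiM) (simp add: D)
  have Wm[measurable]: "W \<in> borel_measurable (PP n)" unfolding W_def by measurable
  have "{S\<in>space (PP n). \<bar>W S\<bar> > s} \<subseteq> {S\<in>space (PP n). W S \<ge> s} \<union> {S\<in>space (PP n). W S \<le> - s}"
    by auto
  hence "measure (PP n) {S\<in>space (PP n). \<bar>W S\<bar> > s}
      \<le> measure (PP n) ({S\<in>space (PP n). W S \<ge> s} \<union> {S\<in>space (PP n). W S \<le> - s})"
    by (intro P.finite_measure_mono) auto
  also have "\<dots> \<le> measure (PP n) {S\<in>space (PP n). W S \<ge> s} + measure (PP n) {S\<in>space (PP n). W S \<le> - s}"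
    by (intro measure_Un_le) auto
  also have "\<dots> \<le> exp (- Lg) + exp (- Lg)"
    using dev_tail[OF q l0, where n=n and t=t and s=s] dev_tail2[OF q l0, where n=n and t=t and s=s] bnd unfolding W_def by linarith
  finally show ?thesis by (simp add: W_def s_def)
qed

end




context calib begin


lemma emp_diff:
  fixes a :: "real^'k"
  assumes S: "S \<in> space (PP n)"
  shows "emp_calib_loss Lcal flgt hat n S (\<chi> j. if j = k then t else a $ j) - emp_calib_loss Lcal flgt hat n S a
    = (1 / real n) * ((\<Sum>i<n. indicator (A k) (S i) * ell t (S i)) - (\<Sum>i<n. indicator (A k) (S i) * ell (a $ k) (S i)))"
proof -
  have Si: "i < n \<Longrightarrow> S i \<in> space D" for i using S by (auto simp: space_PiM PiE_def Pi_def)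
  have "emp_calib_loss Lcal flgt hat n S (\<chi> j. if j = k then t else a $ j) - emp_calib_loss Lcal flgt hat n S a
     = (1 / real n) * (\<Sum>i<n. ell ((\<chi> j. if j = k then t else a $ j) $ hat (fst (S i))) (S i) - ell (a $ hat (fst (S i))) (S i))"
    by (simp add: emp_calib_loss_def ell_def sum_subtractf right_diff_distrib)
  also have "(\<Sum>i<n. ell ((\<chi> j. if j = k then t else a $ j) $ hat (fst (S i))) (S i) - ell (a $ hat (fst (S i))) (S i))
     = (\<Sum>i<n. indicator (A k) (S i) * ell t (S i) - indicator (A k) (S i) * ell (a $ k) (S i))"
    by (intro sum.cong refl) (auto simp: A_def indicator_def Si)
  finally show ?thesis by (simp add: sum_subtractf)
qed

end

theorem corollary1:
  fixes MX :: "'x measure" and D :: "('x \<times> 'k::finite) measure"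
    and flgt :: "'x \<Rightarrow> real^'k" and hat :: "'x \<Rightarrow> 'k"
    and Lcal :: "real^'k \<Rightarrow> real^'k \<Rightarrow> real"
    and Lf Lc am ap \<delta> :: real and n :: nat
  assumes "prob_space D"
    and "sets D = sets (MX \<Otimes>\<^sub>M count_space UNIV)"
    and "flgt \<in> borel_measurable MX"
    and "hat \<in> MX \<rightarrow>\<^sub>M count_space UNIV"
    and "\<forall>x j. flgt x $ j \<le> flgt x $ hat x"
    and "\<forall>x. norm (flgt x) \<le> Lf"
    and "\<forall>y u. 0 \<le> Lcal y u \<and> Lcal y u \<le> 1"
    and "\<forall>y u v. \<bar>Lcal y u - Lcal y v\<bar> \<le> Lc * norm (u - v)"
    and "am \<le> ap"
    and "0 < \<delta>" and "\<delta> < 1"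
  shows "\<exists>E \<in> sets (PiM {..<n} (\<lambda>_. D)).
     measure (PiM {..<n} (\<lambda>_. D)) E
       \<ge> 1 - real CARD('k) * (\<delta> + exp (- p_min hat D * real n / 8)) \<and>
     (\<forall>S\<in>E. \<forall>a::real^'k.
        (\<forall>j. am \<le> a $ j \<and> a $ j \<le> ap) \<and>
        (\<forall>b::real^'k. (\<forall>j. am \<le> b $ j \<and> b $ j \<le> ap) \<longrightarrow>
             emp_calib_loss Lcal flgt hat n S a \<le> emp_calib_loss Lcal flgt hat n S b)
        \<longrightarrow> (\<forall>k. cond_calib_loss Lcal flgt hat D k (a $ k)
                 \<le> (INF t\<in>{am..ap}. cond_calib_loss Lcal flgt hat D k t)
                   + 6 * sqrt (ln (1 + 4 * (ap - am) * sqrt (real n) * Lf * Lc) / (p_min hat D * real n))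
                   + 12 * sqrt (ln (2 / \<delta>) / (p_min hat D * real n))))"
proof -
  interpret calib MX D flgt hat Lcal Lf Lc by (rule calib.intro[OF assms(1-4) assms(6-8)])
  define p where "p = p_min hat D"
  have rq: "(\<lambda>k. measure D {z\<in>space D. hat (fst z) = k}) = q" by (simp add: fun_eq_iff q_def A_def)
  have pmin: "p = Min (range q)" unfolding p_def p_min_def rq ..
  have pq: "\<And>k. p \<le> q k" unfolding pmin by (rule Min_le) auto
  have p0: "0 \<le> p" unfolding pmin using Min_in[of "range q"] by (auto simp: q_def)
  have q1: "\<And>k. q k \<le> 1" by (simp add: q_def)
  have K1: "real CARD('k) \<ge> 1" by simp
  show ?thesis
  proof (cases "p > 0 \<and> n > 0")
    case False
    hence "p * real n = 0" using p0 by auto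
    hence "1 - real CARD('k) * (\<delta> + exp (- p_min hat D * real n / 8)) \<le> 0"
    proof -
      have e: "exp (- p_min hat D * real n / 8) = 1" using \<open>p * real n = 0\<close> by (simp add: p_def[symmetric])
      have "1 * 1 \<le> real CARD('k) * (\<delta> + 1)" using K1 assms(10) by (intro mult_mono) auto
      then show ?thesis unfolding e by simp
    qed
    then show ?thesis by (intro bexI[of _ "{}"]) auto
  next
    case True
    hence p: "p > 0" and n: "n > 0" by auto
    have dl: "0 < \<delta>" "\<delta> < 1" using assms(10,11) by auto
    define c where "c = 2 * Lf * Lc"
    have c0: "c \<ge> 0" using Lf0 Lc0 by (simp add: c_def)
    obtain T where T: "finite T" "T \<noteq> {}" "real (card T) \<le> 1 + 2 * (ap - am) * sqrt (real n) * c"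
      and cov: "\<forall>t\<in>{am..ap}. \<exists>t'\<in>T. c * \<bar>t - t'\<bar> \<le> 1 / (2 * sqrt (real n))"
      using cover[OF assms(9) c0 n] by blast
    define X where "X = 4 * (ap - am) * sqrt (real n) * Lf * Lc"
    define Nt where "Nt = real (card T)"
    have NtX: "Nt \<le> 1 + X" using T(3) by (simp add: Nt_def X_def c_def mult_ac)
    have Nt1: "1 \<le> Nt" using T(1,2) by (simp add: Nt_def Suc_le_eq card_gt_0_iff)
    define Lg where "Lg = ln (2 * Nt / \<delta>)"
    have Lg0: "Lg > 0" unfolding Lg_def using Nt1 dl by (subst ln_gt_zero_iff) (auto simp: field_simps)
    have eLg: "exp (- Lg) = \<delta> / (2 * Nt)" using Nt1 dl by (simp add: Lg_def exp_minus)
    define Kg where "Kg = {k. Lg \<le> real n * q k}"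
    define cnt where "cnt = (\<lambda>k S. (\<Sum>i<n. indicator (A k) (S i) :: real))"
    define Wd where "Wd = (\<lambda>k t S. (\<Sum>i<n. indicator (A k) (S i) * (ell t (S i) - mu k t)))"
    define G where "G = (\<lambda>k. {S\<in>space (PP n). cnt k S \<le> real n * q k / 2})"
    define H where "H = (\<lambda>k t. {S\<in>space (PP n). \<bar>Wd k t S\<bar> > sqrt (real n * q k * Lg)})"
    define Bad where "Bad = (\<Union>k\<in>Kg. G k \<union> (\<Union>t\<in>T. H k t))"
    define E where "E = space (PP n) - Bad"
    interpret P: prob_space "PP n" by (rule prob_space_PiM) (simp add: D)
    have cntm[measurable]: "cnt k \<in> borel_measurable (PP n)" for k unfolding cnt_def by measurable
    have Wdm[measurable]: "Wd k t \<in> borel_measurable (PP n)" for k t unfolding Wd_def by measurable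
    have Gs[measurable]: "G k \<in> sets (PP n)" for k unfolding G_def by measurable
    have Hs[measurable]: "H k t \<in> sets (PP n)" for k t unfolding H_def by measurable
    have Bads: "Bad \<in> sets (PP n)" unfolding Bad_def using T(1) by (intro sets.finite_UN sets.Un) auto
    have Es: "E \<in> sets (PP n)" unfolding E_def using Bads by auto
    have mG: "measure (PP n) (G k) \<le> exp (- p_min hat D * real n / 8)" for k
    proof -
      have "measure (PP n) (G k) \<le> exp (- (real n * q k / 8))" unfolding G_def cnt_def by (rule cnt_tail)
      also have "\<dots> \<le> exp (- p_min hat D * real n / 8)"
        using pq[of k] n by (simp add: p_def[symmetric] mult.commute)
      finally show ?thesis .
    qed
    have mH: "measure (PP n) (H k t) \<le> 2 * exp (- Lg)" if k: "k \<in> Kg" for k t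
    proof -
      have "q k > 0" using pq[of k] p by linarith
      then show ?thesis unfolding H_def Wd_def
        by (rule dev_both) (use k Lg0 n in \<open>auto simp: Kg_def\<close>)
    qed
    have "measure (PP n) Bad \<le> (\<Sum>k\<in>Kg. measure (PP n) (G k \<union> (\<Union>t\<in>T. H k t)))"
      unfolding Bad_def using T(1) by (intro measure_UNION_le sets.Un sets.finite_UN Gs Hs) auto
    also have "\<dots> \<le> (\<Sum>k\<in>Kg. measure (PP n) (G k) + (\<Sum>t\<in>T. measure (PP n) (H k t)))"
    proof (rule sum_mono)
      fix k
      have "measure (PP n) (G k \<union> (\<Union>t\<in>T. H k t)) \<le> measure (PP n) (G k) + measure (PP n) (\<Union>t\<in>T. H k t)"
        using T(1) by (intro measure_Un_le) auto
      also have "measure (PP n) (\<Union>t\<in>T. H k t) \<le> (\<Sum>t\<in>T. measure (PP n) (H k t))"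
        using T(1) by (intro measure_UNION_le) auto
      finally show "measure (PP n) (G k \<union> (\<Union>t\<in>T. H k t)) \<le> measure (PP n) (G k) + (\<Sum>t\<in>T. measure (PP n) (H k t))"
        by simp
    qed
    also have "\<dots> \<le> (\<Sum>k\<in>Kg. exp (- p_min hat D * real n / 8) + (\<Sum>t\<in>T. 2 * exp (- Lg)))"
      by (intro sum_mono add_mono mG mH) auto
    also have "(\<Sum>t\<in>T. 2 * exp (- Lg)) = \<delta>" using Nt1 by (simp add: eLg Nt_def[symmetric])
    also have "(\<Sum>k\<in>Kg. exp (- p_min hat D * real n / 8) + \<delta>) = real (card Kg) * (\<delta> + exp (- p_min hat D * real n / 8))"
      by (simp add: add.commute)
    also have "\<dots> \<le> real CARD('k) * (\<delta> + exp (- p_min hat D * real n / 8))"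
      using dl by (intro mult_right_mono) (auto intro: card_mono add_nonneg_nonneg less_imp_le)
    finally have mBad: "measure (PP n) Bad \<le> real CARD('k) * (\<delta> + exp (- p_min hat D * real n / 8))" .
    have mE: "measure (PP n) E \<ge> 1 - real CARD('k) * (\<delta> + exp (- p_min hat D * real n / 8))"
      using mBad P.prob_compl[OF Bads] by (simp add: E_def)
    show ?thesis
    proof (rule bexI[where x=E, OF _ Es], rule conjI[OF mE], intro ballI allI impI)
      fix S and a :: "real^'k" and k
      assume SE: "S \<in> E"
      assume ab: "(\<forall>j. am \<le> a $ j \<and> a $ j \<le> ap) \<and>
        (\<forall>b::real^'k. (\<forall>j. am \<le> b $ j \<and> b $ j \<le> ap) \<longrightarrow>
             emp_calib_loss Lcal flgt hat n S a \<le> emp_calib_loss Lcal flgt hat n S b)"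
      define R where "R = 6 * sqrt (ln (1 + 4 * (ap - am) * sqrt (real n) * Lf * Lc) / (p_min hat D * real n))
                   + 12 * sqrt (ln (2 / \<delta>) / (p_min hat D * real n))"
      have S: "S \<in> space (PP n)" using SE by (simp add: E_def)
      have INF0: "0 \<le> (INF t\<in>{am..ap}. cond_calib_loss Lcal flgt hat D k t)"
        using assms(9) by (intro cINF_greatest) (auto simp: mu_def[symmetric] mu01)
      have key: "cond_calib_loss Lcal flgt hat D k (a $ k) \<le> (INF t\<in>{am..ap}. cond_calib_loss Lcal flgt hat D k t) + R"
      proof (cases "k \<in> Kg")
        case False
        hence big: "ln (2 * Nt / \<delta>) > real n * p" using pq[of k] n
          by (simp add: Kg_def Lg_def) (smt (verit) mult_left_mono of_nat_0_le_iff)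
        have "1 \<le> R" unfolding R_def p_def[symmetric] X_def[symmetric]
          by (rule num_b[OF p n dl Nt1 NtX big])
        moreover have "cond_calib_loss Lcal flgt hat D k (a $ k) \<le> 1" by (simp add: mu_def[symmetric] mu01)
        ultimately show ?thesis using INF0 by linarith
      next
        case True
        have qk: "q k > 0" using pq[of k] p by linarith
        have SB: "S \<notin> Bad" using SE by (simp add: E_def)
        hence Scnt: "cnt k S > real n * q k / 2" and SH: "\<And>t. t \<in> T \<Longrightarrow> \<bar>Wd k t S\<bar> \<le> sqrt (real n * q k * Lg)"
          using True S by (auto simp: Bad_def G_def H_def not_le not_less)
        define N where "N = cnt k S"
        have N0: "N > 0" using Scnt qk n by (simp add: N_def) (smt (verit) divide_pos_pos mult_pos_pos of_nat_0_less_iff)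
        define Em where "Em = (\<lambda>t. \<Sum>i<n. indicator (A k) (S i) * ell t (S i))"
        define eps where "eps = sqrt (real n * q k * Lg) / N"
        define d where "d = 1 / (2 * sqrt (real n))"
        have det: "mu k (a $ k) \<le> mu k t + 2 * eps + 4 * d" if t: "t \<in> {am..ap}" for t
        proof (rule determ[where E=Em and N=N and c=c and T=T and am=am and ap=ap and mu="mu k" and a="a $ k" and t=t and eps=eps and d=d])
          show "0 < N" by (rule N0)
          show "\<bar>Em t - Em t'\<bar> \<le> N * (c * \<bar>t - t'\<bar>)" for t t'
          proof -
            have "\<bar>Em t - Em t'\<bar> = \<bar>\<Sum>i<n. indicator (A k) (S i) * (ell t (S i) - ell t' (S i))\<bar>"
              by (simp add: Em_def sum_subtractf right_diff_distrib)
            also have "\<dots> \<le> (\<Sum>i<n. \<bar>indicator (A k) (S i) * (ell t (S i) - ell t' (S i))\<bar>)" by (rule sum_abs)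
            also have "\<dots> \<le> (\<Sum>i<n. indicator (A k) (S i) * (c * \<bar>t - t'\<bar>))"
              by (intro sum_mono) (auto simp: indicator_def c_def ell_lip)
            also have "\<dots> = N * (c * \<bar>t - t'\<bar>)" by (simp add: N_def cnt_def sum_distrib_right)
            finally show ?thesis .
          qed
          show "\<bar>mu k t - mu k t'\<bar> \<le> c * \<bar>t - t'\<bar>" for t t' using mu_lip[OF qk] by (simp add: c_def)
          show "\<bar>Em t' - N * mu k t'\<bar> \<le> N * eps" if "t' \<in> T" for t'
          proof -
            have "Em t' - N * mu k t' = Wd k t' S"
              by (simp add: Em_def N_def cnt_def Wd_def sum_subtractf sum_distrib_right right_diff_distrib)
            moreover have "N * eps = sqrt (real n * q k * Lg)" using N0 by (simp add: eps_def)
            ultimately show ?thesis using SH[OF that] by simp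
          qed
          show "\<exists>t'\<in>T. c * \<bar>u - t'\<bar> \<le> d" if "u \<in> {am..ap}" for u using cov that by (simp add: d_def)
          show "a $ k \<in> {am..ap}" using ab by auto
          show "Em (a $ k) \<le> Em u" if u: "u \<in> {am..ap}" for u
          proof -
            define b :: "real^'k" where "b = (\<chi> j. if j = k then u else a $ j)"
            have "\<forall>j. am \<le> b $ j \<and> b $ j \<le> ap" using ab u by (auto simp: b_def)
            hence "emp_calib_loss Lcal flgt hat n S a \<le> emp_calib_loss Lcal flgt hat n S b" using ab by blast
            hence "0 \<le> (1 / real n) * (Em u - Em (a $ k))"
              using emp_diff[OF S, of k u a] by (simp add: b_def Em_def)
            thus ?thesis using n by (simp add: zero_le_divide_iff)
          qed
        qed (use t in auto)
        have epsb: "eps \<le> 2 * sqrt (Lg / (real n * p))"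
        proof -
          have nq: "real n * q k > 0" using n qk by simp
          have "eps \<le> sqrt (real n * q k * Lg) / (real n * q k / 2)"
            unfolding eps_def N_def using Scnt nq Lg0 by (intro divide_left_mono) auto
          also have "\<dots> = 2 * (sqrt (real n * q k * Lg) / (real n * q k))" by simp
          also have "sqrt (real n * q k * Lg) / (real n * q k) = sqrt (Lg / (real n * q k))"
          proof -
            have "sqrt (real n * q k * Lg) = sqrt (real n * q k) * sqrt Lg" by (simp add: real_sqrt_mult)
            moreover have "real n * q k = sqrt (real n * q k) * sqrt (real n * q k)" using nq by simp
            ultimately have "sqrt (real n * q k * Lg) / (real n * q k) = sqrt Lg / sqrt (real n * q k)"
              using nq by (metis (no_types, lifting) nonzero_mult_div_cancel_left real_sqrt_gt_0_iff
                 divide_divide_eq_left less_numeral_extra(3) times_divide_eq_right)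
            then show ?thesis by (simp add: real_sqrt_divide)
          qed
          also have "sqrt (Lg / (real n * q k)) \<le> sqrt (Lg / (real n * p))"
            using pq[of k] p n Lg0 by (intro real_sqrt_le_mono divide_left_mono mult_left_mono) auto
          finally show ?thesis by simp
        qed
        have p1: "p \<le> 1" using pq[of k] q1[of k] by linarith
        have "2 * eps + 4 * d \<le> 4 * sqrt (ln (2 * Nt / \<delta>) / (real n * p)) + 4 * (1 / (2 * sqrt (real n)))"
          using epsb by (simp add: d_def Lg_def)
        also have "\<dots> \<le> R" unfolding R_def p_def[symmetric] X_def[symmetric]
          by (rule num_a[OF p p1 n dl Nt1 NtX])
        finally have R: "2 * eps + 4 * d \<le> R" .
        have "mu k (a $ k) - R \<le> (INF t\<in>{am..ap}. mu k t)"
          using assms(9) det R by (intro cINF_greatest) (auto, smt (verit))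
        then show ?thesis by (simp add: mu_def)
      qed
      show "cond_calib_loss Lcal flgt hat D k (a $ k)
                 \<le> (INF t\<in>{am..ap}. cond_calib_loss Lcal flgt hat D k t)
                   + 6 * sqrt (ln (1 + 4 * (ap - am) * sqrt (real n) * Lf * Lc) / (p_min hat D * real n))
                   + 12 * sqrt (ln (2 / \<delta>) / (p_min hat D * real n))"
        using key by (simp add: R_def add.assoc)
    qed
  qed
qed


end
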